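(* Let $X$ be a zero-dimensional compact metric space, $T:X\to X$ an aperiodic local homeomorphism, $N\ge1$ an integer and $m=2N$. Let $U\subseteq X$ be clopen and $V\subseteq X$ open such that: (1) the sets $T^{-2N+1}(\overline{U}),T^{-2N+2}(\overline{U}),\dots,T^{-N}(\overline{U})$ are pairwise disjoint, and $T^{-i}(T^i(U))=U$ for $i=1,\dots,N-1$; (2) the sets $T^{-2N+1}(T^N(\overline{V})),\dots,T^{-N}(T^N(\overline{V}))$ are pairwise disjoint; (3) there is $\eta>0$ such that for every $x\in\overline{V}$, every $y\in B(x,\eta)$ and every $1\le i\le N-1$, $T^{-i}(T^{i+N}(\{y\}))=\{T^N(y)\}$. Then there is a clopen set $W\subseteq X$ with $U\subseteq W$, $V\subseteq\bigcup_{0\le i\le m-1}T^{-i}(W)$, $T^{-i}(T^i(W))=W$ for $i=1,\dots,N-1$, and such that the sets $T^{-2N+1}(\overline{W}),\dots,T^{-N}(\overline{W})$ are pairwise disjoint.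
   Context: $X$ zero-dimensional: every point has a base of clopen neighbourhoods. Aperiodic: no $x$ with $T^n(x)=x$ for some $n\ge1$. For $j\ge0$, $T^{-j}(A)$ is the preimage of $A$ under $T^j$. $B(x,\eta)$ is the open ball. *)

theory Defs
  imports "HOL-Analysis.Analysis"
begin

text \<open>The space X is the whole (compact) metric type 'a.\<close>

definition zero_dimensional :: "'a::topological_space itself \<Rightarrow> bool" where
  "zero_dimensional _ \<longleftrightarrow>
     (\<forall>x::'a. \<forall>S. open S \<and> x \<in> S \<longrightarrow> (\<exists>C. open C \<and> closed C \<and> x \<in> C \<and> C \<subseteq> S))"

definition local_homeomorphism :: "('a::topological_space \<Rightarrow> 'b::topological_space) \<Rightarrow> bool" where
  "local_homeomorphism T \<longleftrightarrow> continuous_on UNIV T \<and>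
     (\<forall>x. \<exists>S. open S \<and> x \<in> S \<and> open (T ` S) \<and> (\<exists>g. homeomorphism S (T ` S) T g))"

definition aperiodic :: "('a \<Rightarrow> 'a) \<Rightarrow> bool" where
  "aperiodic T \<longleftrightarrow> (\<forall>x. \<forall>n::nat. n \<ge> 1 \<longrightarrow> (T ^^ n) x \<noteq> x)"

definition preim :: "('a \<Rightarrow> 'a) \<Rightarrow> nat \<Rightarrow> 'a set \<Rightarrow> 'a set" where
  "preim T j A = (T ^^ j) -` A"

end

theory Submission
  imports Defs
begin


lemma lh_cont:
  fixes T :: "'a::topological_space \<Rightarrow> 'a"
  assumes "local_homeomorphism T"
  shows "continuous_on UNIV (T ^^ n)"
proof (induction n)
  case 0 then show ?case by (simp add: funpow.simps)
next
  case (Suc n)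
  have "continuous_on UNIV T" using assms unfolding local_homeomorphism_def by blast
  then show ?case using Suc
    by (simp add: continuous_on_compose2[where t=UNIV])
qed

lemma lh_open1:
  assumes "local_homeomorphism T" "open A"
  shows "open (T ` A)"
proof -
  have "\<forall>x. \<exists>S. open S \<and> x \<in> S \<and> open (T ` S) \<and> (\<exists>g. homeomorphism S (T ` S) T g)"
    using assms(1) unfolding local_homeomorphism_def by blast
  then obtain S where S: "\<And>x. open (S x) \<and> x \<in> S x \<and> open (T ` S x) \<and> (\<exists>g. homeomorphism (S x) (T ` S x) T g)"
    by metis
  have "T ` A = (\<Union>x\<in>A. T ` (A \<inter> S x))" using S by blast
  moreover have "open (T ` (A \<inter> S x))" for x
  proof -
    obtain g where g: "homeomorphism (S x) (T ` S x) T g" using S by blast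
    have "openin (top_of_set (S x)) (A \<inter> S x)"
      using assms(2) by (metis openin_open_Int inf_commute)
    then have "openin (top_of_set (T ` S x)) (T ` (A \<inter> S x))"
      using homeomorphism_imp_open_map[OF g] by blast
    then show ?thesis using S openin_open_trans by blast
  qed
  ultimately show ?thesis by auto
qed

lemma lh_open:
  fixes T :: "'a::topological_space \<Rightarrow> 'a"
  assumes "local_homeomorphism T" "open A"
  shows "open ((T ^^ n) ` A)"
proof (induction n)
  case 0 then show ?case using assms by (simp add: funpow.simps)
next
  case (Suc n)
  have "(T ^^ Suc n) ` A = T ` ((T ^^ n) ` A)" by (simp add: image_comp)
  then show ?case using lh_open1[OF assms(1) Suc] by simp
qed

lemma clopen_between:
  assumes "zero_dimensional TYPE('a::topological_space)" "compact (L::'a set)" "open Op" "L \<subseteq> Op"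
  shows "\<exists>C. open C \<and> closed C \<and> L \<subseteq> C \<and> C \<subseteq> Op"
proof -
  have "\<forall>x\<in>L. \<exists>C. open C \<and> closed C \<and> x \<in> C \<and> C \<subseteq> Op"
    using assms(1,3,4) unfolding zero_dimensional_def by blast
  then obtain C where C: "\<And>x. x \<in> L \<Longrightarrow> open (C x) \<and> closed (C x) \<and> x \<in> C x \<and> C x \<subseteq> Op"
    by metis
  have "L \<subseteq> (\<Union>x\<in>L. C x)" using C by blast
  then obtain F where F: "F \<subseteq> L" "finite F" "L \<subseteq> (\<Union>x\<in>F. C x)"
    using compactE_image[OF assms(2), of L C] C by blast
  show ?thesis
    apply (rule exI[of _ "\<Union>x\<in>F. C x"])
    using F C by (auto intro!: open_UN closed_UN)
qed


lemma disj_from: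
  assumes "\<And>j k x. j \<in> S \<Longrightarrow> k \<in> S \<Longrightarrow> j < k \<Longrightarrow> (T ^^ j) x \<in> A \<Longrightarrow> (T ^^ k) x \<in> A \<Longrightarrow> False"
  shows "disjoint_family_on (\<lambda>k. preim T k A) S"
  unfolding disjoint_family_on_def preim_def
proof (intro ballI impI)
  fix j k assume jk: "j \<in> S" "k \<in> S" "j \<noteq> k"
  show "(T ^^ j) -` A \<inter> (T ^^ k) -` A = {}"
  proof (cases "j < k")
    case True then show ?thesis using assms jk by blast
  next
    case False then have "k < j" using jk by simp
    then show ?thesis using assms jk by blast
  qed
qed

lemma fp_add: "(T ^^ (a + b)) x = (T ^^ a) ((T ^^ b) x)"
  by (simp add: funpow_add)

theorem lemma4p6:
  fixes T :: "'a::metric_space \<Rightarrow> 'a" and N m :: nat and U V :: "'a set"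
  assumes "compact (UNIV :: 'a set)"
    and "zero_dimensional TYPE('a)"
    and "local_homeomorphism T"
    and "aperiodic T"
    and "N \<ge> 1" and "m = 2 * N"
    and "open U" and "closed U" and "open V"
    and "disjoint_family_on (\<lambda>k. preim T k (closure U)) {N..2*N-1}"
    and "\<forall>i\<in>{1..N-1}. preim T i ((T ^^ i) ` U) = U"
    and "disjoint_family_on (\<lambda>k. preim T k ((T ^^ N) ` closure V)) {N..2*N-1}"
    and "\<exists>\<eta>>0. \<forall>x\<in>closure V. \<forall>y\<in>ball x \<eta>. \<forall>i\<in>{1..N-1}.
            preim T i ((T ^^ (i + N)) ` {y}) = {(T ^^ N) y}"
  shows "\<exists>W. open W \<and> closed W \<and> U \<subseteq> W \<and>
           V \<subseteq> (\<Union>i\<in>{0..m-1}. preim T i W) \<and>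
           (\<forall>i\<in>{1..N-1}. preim T i ((T ^^ i) ` W) = W) \<and>
           disjoint_family_on (\<lambda>k. preim T k (closure W)) {N..2*N-1}"
proof (cases "V = {}")
  case True
  then show ?thesis using assms(7,8,10,11) by (intro exI[of _ U]) (auto simp: closure_closed)
next
  case False
  note cl = assms(1)
  have clU: "closure U = U" using assms(8) by (simp add: closure_closed)
  obtain \<eta> where eta: "\<eta> > 0" and inj: "\<forall>x\<in>closure V. \<forall>y\<in>ball x \<eta>. \<forall>i\<in>{1..N-1}.
            preim T i ((T ^^ (i + N)) ` {y}) = {(T ^^ N) y}" using assms(13) by blast
  define K where "K = (T ^^ N) ` closure V"
  have contN: "\<And>n. continuous_on UNIV (T ^^ n)" using lh_cont[OF assms(3)] .
  have cV: "compact (closure V)" using compact_Int_closed[OF cl, of "closure V"] by simp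
  have Kc: "compact K" unfolding K_def
    by (rule compact_continuous_image[OF continuous_on_subset[OF contN] cV]) simp
  have Kcl: "closed K" using Kc compact_imp_closed by blast
  have Kne: "K \<noteq> {}" using False closure_subset unfolding K_def by blast
  have cUc: "compact U" using compact_Int_closed[OF cl assms(8)] by simp
  define D where "D = (\<Union>d\<in>{1..N-1}. preim T d U \<union> (T ^^ d) ` U)"
  have openD: "open D" unfolding D_def preim_def
    using open_vimage[OF assms(7) contN] lh_open[OF assms(3) assms(7)] by blast
  have closedD: "closed D" unfolding D_def preim_def
  proof (intro closed_UN closed_Un ballI)
    fix d show "closed ((T ^^ d) -` U)" using closed_vimage[OF assms(8) contN] .
    show "closed ((T ^^ d) ` U)"
      by (rule compact_imp_closed, rule compact_continuous_image[OF continuous_on_subset[OF contN] cUc]) simp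
  qed simp
  define G where "G = (T ^^ N) ` (\<Union>x\<in>closure V. ball x \<eta>)"
  have openG: "open G" unfolding G_def by (rule lh_open[OF assms(3)]) auto
  define f where "f d y = infdist ((T ^^ N) y) K + infdist ((T ^^ (N + d)) y) K" for d y
  have "\<forall>d\<in>{1..N-1}. \<exists>e>0. \<forall>y. e \<le> f d y"
  proof
    fix d assume d: "d \<in> {1..N-1}"
    have "continuous_on UNIV (f d)" unfolding f_def
      by (intro continuous_intros contN)
    then obtain y0 where y0: "\<forall>y. f d y0 \<le> f d y"
      using continuous_attains_inf[OF cl, of "f d"] by auto
    have "f d y0 > 0"
    proof (rule ccontr)
      assume "\<not> f d y0 > 0"
      then have "infdist ((T ^^ N) y0) K = 0" "infdist ((T ^^ (N + d)) y0) K = 0"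
        unfolding f_def using infdist_nonneg[of _ K] by (smt (verit))+
      then have "(T ^^ N) y0 \<in> K" "(T ^^ (N + d)) y0 \<in> K"
        using in_closure_iff_infdist_zero[OF Kne] Kcl closure_closed by metis+
      moreover have "N \<in> {N..2*N-1}" "N + d \<in> {N..2*N-1}" "N \<noteq> N + d" using d assms(5) by auto
      ultimately show False using assms(12) unfolding disjoint_family_on_def preim_def K_def
        by blast
    qed
    then show "\<exists>e>0. \<forall>y. e \<le> f d y" using y0 by blast
  qed
  then obtain e where e: "\<And>d. d\<in>{1..N-1} \<Longrightarrow> e d > 0 \<and> (\<forall>y. e d \<le> f d y)"
    by metis
  define Op where "Op = -D \<inter> G \<inter> (\<Inter>d\<in>{1..N-1}. {z. infdist z K < e d / 2})"
  have openOp: "open Op" unfolding Op_def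
  proof (intro open_Int open_INT ballI)
    show "open (- D)" using closedD by auto
    show "open G" by (rule openG)
    fix d show "open {z. infdist z K < e d / 2}"
      by (rule open_Collect_less) (intro continuous_intros)+
  qed simp
  have KOp: "K - D \<subseteq> Op"
  proof
    fix z assume z: "z \<in> K - D"
    then obtain x where x: "x \<in> closure V" "z = (T ^^ N) x" unfolding K_def by blast
    have "z \<in> G" unfolding G_def using x eta by force
    moreover have "infdist z K < e d / 2" if "d \<in> {1..N-1}" for d
      using e[OF that] z infdist_zero[of z K] by simp
    ultimately show "z \<in> Op" unfolding Op_def using z by blast
  qed
  obtain C where C: "open C" "closed C" "K - D \<subseteq> C" "C \<subseteq> Op"
    using clopen_between[OF assms(2) compact_diff[OF Kc openD] openOp KOp] by blast
  have CD: "C \<inter> D = {}" and CG: "C \<subseteq> G" using C(4) unfolding Op_def by auto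
  have CC: False if d: "d \<in> {1..N-1}" and y: "(T ^^ N) y \<in> C" "(T ^^ (N + d)) y \<in> C" for d y
  proof -
    have "infdist ((T ^^ N) y) K < e d / 2" "infdist ((T ^^ (N + d)) y) K < e d / 2"
      using y C(4) d unfolding Op_def by auto
    then have "f d y < e d" unfolding f_def by simp
    moreover have "e d \<le> f d y" using e[OF d] by blast
    ultimately show False by simp
  qed
  define W where "W = U \<union> C"
  have clW: "closure W = W" unfolding W_def using assms(8) C(2) by (simp add: closure_closed)
  have inv: "preim T i ((T ^^ i) ` W) = W" if i: "i \<in> {1..N-1}" for i
  proof -
    have "preim T i ((T ^^ i) ` C) = C"
    proof
      show "C \<subseteq> preim T i ((T ^^ i) ` C)" unfolding preim_def by blast
      show "preim T i ((T ^^ i) ` C) \<subseteq> C"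
      proof
        fix x assume "x \<in> preim T i ((T ^^ i) ` C)"
        then obtain c where c: "c \<in> C" "(T ^^ i) x = (T ^^ i) c" unfolding preim_def by auto
        then obtain x0 y where xy: "x0 \<in> closure V" "y \<in> ball x0 \<eta>" "c = (T ^^ N) y"
          using CG unfolding G_def by blast
        have "(T ^^ i) x = (T ^^ (i + N)) y" using c xy by (simp add: fp_add)
        then have "x \<in> preim T i ((T ^^ (i + N)) ` {y})" unfolding preim_def by simp
        then have "x = c" using inj xy i by auto
        then show "x \<in> C" using c by simp
      qed
    qed
    then show ?thesis using assms(11) i unfolding W_def preim_def by (simp add: image_Un vimage_Un)
  qed
  have cover: "V \<subseteq> (\<Union>i\<in>{0..m-1}. preim T i W)"
  proof
    fix v assume v: "v \<in> V"
    define z where "z = (T ^^ N) v"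
    have zK: "z \<in> K" unfolding K_def z_def using v closure_subset by blast
    show "v \<in> (\<Union>i\<in>{0..m-1}. preim T i W)"
    proof (cases "z \<in> D")
      case False
      then have "z \<in> C" using zK C(3) by blast
      then have "v \<in> preim T N W" unfolding preim_def W_def z_def by simp
      moreover have "N \<in> {0..m-1}" using assms(5,6) by simp
      ultimately show ?thesis by blast
    next
      case True
      then obtain d where d: "d \<in> {1..N-1}" and dd: "z \<in> preim T d U \<or> z \<in> (T ^^ d) ` U"
        unfolding D_def by blast
      show ?thesis
      proof (cases "z \<in> preim T d U")
        case True
        then have "v \<in> preim T (d + N) W" unfolding preim_def W_def z_def by (simp add: fp_add)
        moreover have "d + N \<in> {0..m-1}" using assms(5,6) d by auto
        ultimately show ?thesis by blast
      next
        case False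
        then obtain u where u: "u \<in> U" "z = (T ^^ d) u" using dd by blast
        have "d + (N - d) = N" using d by auto
        then have "(T ^^ d) ((T ^^ (N - d)) v) = z" unfolding z_def
          using fp_add[where T=T and a=d and b="N - d" and x=v] by simp
        then have "(T ^^ (N - d)) v \<in> preim T d ((T ^^ d) ` U)" using u unfolding preim_def by simp
        then have "(T ^^ (N - d)) v \<in> U" using assms(11) d by simp
        then have "v \<in> preim T (N - d) W" unfolding preim_def W_def by simp
        moreover have "N - d \<in> {0..m-1}" using assms(5,6) d by simp
        ultimately show ?thesis by blast
      qed
    qed
  qed
  have disj: "disjoint_family_on (\<lambda>k. preim T k W) {N..2*N-1}"
  proof (rule disj_from)
    fix j k x assume jk: "j \<in> {N..2*N-1}" "k \<in> {N..2*N-1}" "j < k"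
      and xj: "(T ^^ j) x \<in> W" and xk: "(T ^^ k) x \<in> W"
    define d where "d = k - j"
    define y where "y = (T ^^ (j - N)) x"
    have d: "d \<in> {1..N-1}" using jk unfolding d_def by auto
    have j: "j = N + (j - N)" using jk by auto
    have k: "k = (N + d) + (j - N)" using jk unfolding d_def by auto
    have e1: "(T ^^ j) x = (T ^^ N) y" unfolding y_def
      using fp_add[where T=T and a=N and b="j - N" and x=x] j by simp
    have e2: "(T ^^ k) x = (T ^^ (N + d)) y" unfolding y_def
      using fp_add[where T=T and a="N + d" and b="j - N" and x=x] k by simp
    have e3: "(T ^^ (N + d)) y = (T ^^ d) ((T ^^ N) y)"
      using fp_add[where T=T and a=d and b=N and x=y] by (simp add: add.commute)
    consider "(T ^^ j) x \<in> U" "(T ^^ k) x \<in> U" | "(T ^^ j) x \<in> C" "(T ^^ k) x \<in> U"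
      | "(T ^^ j) x \<in> U" "(T ^^ k) x \<in> C" | "(T ^^ j) x \<in> C" "(T ^^ k) x \<in> C"
      using xj xk unfolding W_def by blast
    then show False
    proof cases
      case 1
      have "preim T j (closure U) \<inter> preim T k (closure U) = {}"
        using assms(10) jk unfolding disjoint_family_on_def by simp
      then show False using 1 unfolding preim_def clU by blast
    next
      case 2
      have "(T ^^ d) ((T ^^ N) y) \<in> U" using 2 e2 e3 by simp
      then have "(T ^^ N) y \<in> preim T d U" unfolding preim_def by simp
      then have "(T ^^ N) y \<in> preim T d U \<union> (T ^^ d) ` U" by (rule UnI1)
      then have yD: "(T ^^ N) y \<in> D" unfolding D_def by (rule UN_I[OF d])
      have yC: "(T ^^ N) y \<in> C" using 2(1) e1 by simp
      show False using CD yD yC by (simp add: disjoint_iff)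
    next
      case 3
      have "(T ^^ N) y \<in> U" using 3 e1 by simp
      then have "(T ^^ d) ((T ^^ N) y) \<in> (T ^^ d) ` U" by blast
      then have "(T ^^ d) ((T ^^ N) y) \<in> preim T d U \<union> (T ^^ d) ` U" by (rule UnI2)
      then have "(T ^^ d) ((T ^^ N) y) \<in> D" unfolding D_def by (rule UN_I[OF d])
      then have kD: "(T ^^ k) x \<in> D" using e2 e3 by simp
      show False using CD kD 3(2) by (simp add: disjoint_iff)
    next
      case 4
      then show False using CC[OF d, of y] e1 e2 by simp
    qed
  qed
  show ?thesis
    apply (rule exI[of _ W])
    using C(1,2) assms(7,8) cover inv disj clW unfolding W_def by auto
qed

end
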